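(* Let $G=(V,E)$ be a finite connected undirected graph, let $k$ be a positive integer, and fix a DFS order on $V$. Consider the lexicographic order $\preceq$ on $\mathcal{C}(G;k)$ induced by this vertex order. Let $X\in\mathcal{C}(G;k)$ be an element that is not the $\preceq$-smallest element of $\mathcal{C}(G;k)$. Then there exists $X'\in\mathcal{N}(X)$ with $X'\prec X$.
   Context: $\mathcal{C}(G;k)$ denotes the family of all vertex sets $X\subseteq V$ with $|X|=k$ such that the induced subgraph $G[X]$ is connected. For $X\in\mathcal{C}(G;k)$, the neighborhood of $X$ is $\mathcal{N}(X)=\{X'\in\mathcal{C}(G;k): |X\cap X'|=k-1\}$. A DFS order on $V$ is the linear order of the vertices by their discovery time in a depth-first search of $G$, started from some vertex, and vertices are compared using $<$ with respect to this order. For distinct $k$-sets $A,B\subseteq V$, write $A\prec B$ if the smallest vertex of the symmetric difference $A\triangle B$ lies in $A$. Equivalently, the increasing sequence of elements of $A$ is lexicographically smaller than that of $B$. Write $A\preceq B$ if $A\prec B$ or $A=B$. *)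

theory Defs
  imports Main
begin

definition graph :: "'a set \<Rightarrow> ('a \<Rightarrow> 'a \<Rightarrow> bool) \<Rightarrow> bool" where
  "graph V E \<longleftrightarrow> finite V \<and> (\<forall>u v. E u v \<longrightarrow> u \<in> V \<and> v \<in> V)
     \<and> (\<forall>u v. E u v \<longrightarrow> E v u) \<and> (\<forall>u. \<not> E u u)"

definition connected_on :: "('a \<Rightarrow> 'a \<Rightarrow> bool) \<Rightarrow> 'a set \<Rightarrow> bool" where
  "connected_on E X \<longleftrightarrow> X \<noteq> {} \<and>
     (\<forall>x\<in>X. \<forall>y\<in>X. (\<lambda>a b. a \<in> X \<and> b \<in> X \<and> E a b)\<^sup>*\<^sup>* x y)"

definition conn_sets :: "'a set \<Rightarrow> ('a \<Rightarrow> 'a \<Rightarrow> bool) \<Rightarrow> nat \<Rightarrow> 'a set set" where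
  "conn_sets V E k = {X. X \<subseteq> V \<and> card X = k \<and> connected_on E X}"

definition nbhd :: "'a set \<Rightarrow> ('a \<Rightarrow> 'a \<Rightarrow> bool) \<Rightarrow> nat \<Rightarrow> 'a set \<Rightarrow> 'a set set" where
  "nbhd V E k X = {X' \<in> conn_sets V E k. card (X \<inter> X') = k - 1}"

text \<open>State: (discovery order so far,
  stack of active vertices, top first).\<close>
inductive dfs_step :: "('a \<Rightarrow> 'a \<Rightarrow> bool) \<Rightarrow> 'a list \<times> 'a list \<Rightarrow> 'a list \<times> 'a list \<Rightarrow> bool"
  for E where
  push: "E u w \<Longrightarrow> w \<notin> set ord \<Longrightarrow> dfs_step E (ord, u # st) (ord @ [w], w # u # st)"
| pop: "(\<forall>w. E u w \<longrightarrow> w \<in> set ord) \<Longrightarrow> dfs_step E (ord, u # st) (ord, st)"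

definition dfs_order :: "'a set \<Rightarrow> ('a \<Rightarrow> 'a \<Rightarrow> bool) \<Rightarrow> 'a list \<Rightarrow> bool" where
  "dfs_order V E ord \<longleftrightarrow> (\<exists>r\<in>V. (dfs_step E)\<^sup>*\<^sup>* ([r], [r]) (ord, []))"

definition pos :: "'a list \<Rightarrow> 'a \<Rightarrow> nat" where
  "pos ord x = (LEAST i. i < length ord \<and> ord ! i = x)"

definition lex_less :: "'a list \<Rightarrow> 'a set \<Rightarrow> 'a set \<Rightarrow> bool" where
  "lex_less ord A B \<longleftrightarrow> A \<noteq> B \<and>
     (\<exists>x \<in> A - B. \<forall>y \<in> (A - B) \<union> (B - A). pos ord x \<le> pos ord y)"

definition lex_le :: "'a list \<Rightarrow> 'a set \<Rightarrow> 'a set \<Rightarrow> bool" where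
  "lex_le ord A B \<longleftrightarrow> lex_less ord A B \<or> A = B"

end

theory Submission
  imports Defs
begin

abbreviation RR :: "('a \<Rightarrow> 'a \<Rightarrow> bool) \<Rightarrow> 'a set \<Rightarrow> 'a \<Rightarrow> 'a \<Rightarrow> bool" where
  "RR E X \<equiv> (\<lambda>a b. a \<in> X \<and> b \<in> X \<and> E a b)"

lemma RR_mono:
  assumes "(RR E A)\<^sup>*\<^sup>* x y" "A \<subseteq> B" shows "(RR E B)\<^sup>*\<^sup>* x y"
  using assms(1)
proof (induction rule: rtranclp_induct)
  case base then show ?case by simp
next
  case (step y z)
  have "RR E B y z" using step assms(2) by auto
  then show ?case by (rule rtranclp.rtrancl_into_rtrancl[OF step.IH])
qed

lemma conn_union:
  assumes "connected_on E A" "connected_on E B" "A \<inter> B \<noteq> {}"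
  shows "connected_on E (A \<union> B)"
proof -
  obtain c where c: "c \<in> A" "c \<in> B" using assms(3) by blast
  have hA: "(RR E (A \<union> B))\<^sup>*\<^sup>* x y" if "x \<in> A" "y \<in> A" for x y
    using RR_mono[where E=E and A=A and B="A \<union> B"] assms(1) that unfolding connected_on_def by blast
  have hB: "(RR E (A \<union> B))\<^sup>*\<^sup>* x y" if "x \<in> B" "y \<in> B" for x y
    using RR_mono[where E=E and A=B and B="A \<union> B"] assms(2) that unfolding connected_on_def by blast
  show ?thesis unfolding connected_on_def
  proof (intro conjI ballI)
    show "A \<union> B \<noteq> {}" using c by blast
  next
    fix x y assume "x \<in> A \<union> B" "y \<in> A \<union> B"
    then show "(RR E (A \<union> B))\<^sup>*\<^sup>* x y"
      using hA hB c by (meson Un_iff rtranclp_trans)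
  qed
qed

lemma conn_single: "connected_on E {a}"
  unfolding connected_on_def by auto

lemma conn_pair:
  assumes "E a b" "E b a" shows "connected_on E {a, b}"
  unfolding connected_on_def
proof (intro conjI ballI)
  fix x y assume "x \<in> {a, b}" "y \<in> {a, b}"
  then show "(RR E {a, b})\<^sup>*\<^sup>* x y" using assms
    by (auto intro: r_into_rtranclp)
qed simp

lemma conn_insert:
  assumes "connected_on E A" "b \<in> A" "E a b" "E b a"
  shows "connected_on E (insert a A)"
proof -
  have "connected_on E (A \<union> {a, b})"
    using conn_union[OF assms(1) conn_pair[where E=E and a=a and b=b, OF assms(3) assms(4)]] assms(2) by blast
  moreover have "A \<union> {a, b} = insert a A" using assms(2) by blast
  ultimately show ?thesis by simp
qed

lemma conn_edge:
  assumes "connected_on E S" "Q \<subseteq> S" "q \<in> Q" "s \<in> S" "s \<notin> Q"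
  shows "\<exists>a\<in>Q. \<exists>b\<in>S - Q. E a b"
proof -
  have p: "(RR E S)\<^sup>*\<^sup>* q s" using assms unfolding connected_on_def by blast
  have "y \<notin> Q \<Longrightarrow> \<exists>a\<in>Q. \<exists>b\<in>S - Q. E a b" if "(RR E S)\<^sup>*\<^sup>* q y" for y
    using that
  proof (induction rule: rtranclp_induct)
    case base then show ?case using assms(3) by simp
  next
    case (step y z)
    then show ?case by (cases "y \<in> Q") auto
  qed
  then show ?thesis using p assms(5) by blast
qed

lemma nonsep:
  assumes "finite S" "connected_on E S" "connected_on E Q" "Q \<subseteq> S" "Q \<noteq> S"
    and sym: "\<forall>u v. E u v \<longrightarrow> E v u"
  shows "\<exists>w\<in>S - Q. connected_on E (S - {w})"
  using assms(3-5)
proof (induction "card (S - Q)" arbitrary: Q rule: less_induct)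
  case less
  obtain q where q: "q \<in> Q" using less.prems(1) unfolding connected_on_def by blast
  obtain s where s: "s \<in> S" "s \<notin> Q" using less.prems(2,3) by blast
  obtain a b where ab: "a \<in> Q" "b \<in> S - Q" "E a b"
    using conn_edge[OF assms(2) less.prems(2) q s] by blast
  have cQ': "connected_on E (insert b Q)"
    using conn_insert[OF less.prems(1) ab(1)] ab(3) sym by blast
  show ?case
  proof (cases "insert b Q = S")
    case True
    then have "S - {b} = Q" using ab(2) by blast
    then show ?thesis using ab(2) less.prems(1) by auto
  next
    case False
    have "card (S - insert b Q) < card (S - Q)"
      using ab(2) assms(1) by (intro psubset_card_mono) auto
    from less.hyps[OF this cQ' _ False] ab(2) less.prems(2)
    obtain w where "w \<in> S - insert b Q" "connected_on E (S - {w})" by blast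
    then show ?thesis by blast
  qed
qed

definition dinv :: "'a set \<Rightarrow> ('a \<Rightarrow> 'a \<Rightarrow> bool) \<Rightarrow> 'a \<Rightarrow> 'a list \<times> 'a list \<Rightarrow> bool" where
  "dinv V E r s \<longleftrightarrow> (case s of (ord, st) \<Rightarrow>
     distinct ord \<and> ord \<noteq> [] \<and> ord ! 0 = r \<and> set ord \<subseteq> V \<and> set st \<subseteq> set ord \<and>
     (\<forall>i. 0 < i \<and> i < length ord \<longrightarrow> (\<exists>j<i. E (ord ! j) (ord ! i))) \<and>
     (\<forall>v \<in> set ord - set st. \<forall>w. E v w \<longrightarrow> w \<in> set ord))"

lemma dinv_step:
  assumes g: "graph V E" and st: "dfs_step E s s'" and inv: "dinv V E r s"
  shows "dinv V E r s'"
  using st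
proof cases
  case (push u w ord st)
  from inv[unfolded push(1) dinv_def prod.case] have I: "distinct ord" "ord \<noteq> []" "ord ! 0 = r"
    "set ord \<subseteq> V" "set (u # st) \<subseteq> set ord"
    "\<forall>i. 0 < i \<and> i < length ord \<longrightarrow> (\<exists>j<i. E (ord ! j) (ord ! i))"
    "\<forall>v \<in> set ord - set (u # st). \<forall>w. E v w \<longrightarrow> w \<in> set ord" by blast+
  have wV: "w \<in> V" using g push(3) unfolding graph_def by blast
  have uo: "u \<in> set ord" using I(5) by simp
  obtain j where j: "j < length ord" "ord ! j = u" using uo unfolding in_set_conv_nth by blast
  have par: "\<exists>j<i. E ((ord @ [w]) ! j) ((ord @ [w]) ! i)" if "0 < i" "i < length (ord @ [w])" for i
  proof (cases "i < length ord")
    case True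
    have "0 < i \<and> i < length ord" using True that(1) by simp
    then have "\<exists>j<i. E (ord ! j) (ord ! i)" using I(6)[rule_format, of i] by blast
    then obtain j' where j': "j' < i" "E (ord ! j') (ord ! i)" by blast
    have e1: "(ord @ [w]) ! j' = ord ! j'" using j'(1) True by (simp add: nth_append)
    have e2: "(ord @ [w]) ! i = ord ! i" using True by (simp add: nth_append)
    show ?thesis using j' e1 e2 by metis
  next
    case False
    then have ii: "i = length ord" using that by simp
    have e1: "(ord @ [w]) ! j = u" using j by (simp add: nth_append)
    have e2: "(ord @ [w]) ! i = w" using ii by simp
    show ?thesis using j(1) ii e1 e2 push(3) by metis
  qed
  have cl: "\<forall>v \<in> set (ord @ [w]) - set (w # u # st). \<forall>x. E v x \<longrightarrow> x \<in> set (ord @ [w])"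
  proof (intro ballI allI impI)
    fix v x assume v: "v \<in> set (ord @ [w]) - set (w # u # st)" and e: "E v x"
    have "v \<in> set ord - set (u # st)" using v by simp
    then have "x \<in> set ord" using I(7) e by blast
    then show "x \<in> set (ord @ [w])" by simp
  qed
  have h0: "(ord @ [w]) ! 0 = r" using I(2,3) by (simp add: nth_append)
  have h1: "distinct (ord @ [w])" using I(1) push(4) by simp
  have h2: "ord @ [w] \<noteq> []" by simp
  have h3: "set (ord @ [w]) \<subseteq> V" using I(4) wV by simp
  have h4: "set (w # u # st) \<subseteq> set (ord @ [w])" using I(5) by auto
  have h5: "\<forall>i. 0 < i \<and> i < length (ord @ [w]) \<longrightarrow> (\<exists>j<i. E ((ord @ [w]) ! j) ((ord @ [w]) ! i))"
    using par by blast
  show ?thesis unfolding push(2) dinv_def prod.case using h0 h1 h2 h3 h4 h5 cl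
    by (intro conjI) assumption+
next
  case (pop u ord st)
  from inv[unfolded pop(1) dinv_def prod.case] have I: "distinct ord" "ord \<noteq> []" "ord ! 0 = r"
    "set ord \<subseteq> V" "set (u # st) \<subseteq> set ord"
    "\<forall>i. 0 < i \<and> i < length ord \<longrightarrow> (\<exists>j<i. E (ord ! j) (ord ! i))"
    "\<forall>v \<in> set ord - set (u # st). \<forall>w. E v w \<longrightarrow> w \<in> set ord" by blast+
  have cl: "\<forall>v \<in> set ord - set st. \<forall>w. E v w \<longrightarrow> w \<in> set ord"
  proof (intro ballI allI impI)
    fix v x assume v: "v \<in> set ord - set st" and e: "E v x"
    show "x \<in> set ord"
    proof (cases "v = u")
      case True then show ?thesis using pop(3) e by blast
    next
      case False then have "v \<in> set ord - set (u # st)" using v by simp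
      then show ?thesis using I(7) e by blast
    qed
  qed
  have st': "set st \<subseteq> set ord" using I(5) by simp
  show ?thesis unfolding pop(2) dinv_def prod.case using I(1,2,3,4,6) st' cl
    by (intro conjI) assumption+
qed

lemma dinv_steps:
  assumes g: "graph V E" and st: "(dfs_step E)\<^sup>*\<^sup>* s s'" and inv: "dinv V E r s"
  shows "dinv V E r s'"
  using st inv by (induction rule: rtranclp_induct) (auto intro: dinv_step[OF g])

lemma dfs_facts:
  assumes g: "graph V E" and c: "connected_on E V" and d: "dfs_order V E ord"
  shows "distinct ord \<and> set ord = V \<and> ord \<noteq> [] \<and>
     (\<forall>i. 0 < i \<and> i < length ord \<longrightarrow> (\<exists>j<i. E (ord ! j) (ord ! i)))"
proof -
  obtain r where r: "r \<in> V" "(dfs_step E)\<^sup>*\<^sup>* ([r], [r]) (ord, [])"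
    using d unfolding dfs_order_def by blast
  have "dinv V E r ([r], [r])" using r(1) unfolding dinv_def by auto
  from dinv_steps[OF g r(2) this] have I: "distinct ord" "ord \<noteq> []" "ord ! 0 = r" "set ord \<subseteq> V"
    "\<forall>i. 0 < i \<and> i < length ord \<longrightarrow> (\<exists>j<i. E (ord ! j) (ord ! i))"
    "\<forall>v \<in> set ord. \<forall>w. E v w \<longrightarrow> w \<in> set ord"
    unfolding dinv_def by auto
  have rin: "r \<in> set ord" using I(2,3) by (metis length_greater_0_conv nth_mem)
  have "y \<in> set ord" if "(RR E V)\<^sup>*\<^sup>* r y" for y
    using that by (induction rule: rtranclp_induct) (use rin I(6) in auto)
  then have "V \<subseteq> set ord" using c r(1) unfolding connected_on_def by blast
  then show ?thesis using I by blast
qed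

lemma pos_nth: "distinct xs \<Longrightarrow> i < length xs \<Longrightarrow> pos xs (xs ! i) = i"
  unfolding pos_def by (rule Least_equality) (auto simp: nth_eq_iff_index_eq)

lemma pos_in: "x \<in> set xs \<Longrightarrow> pos xs x < length xs \<and> xs ! pos xs x = x"
  unfolding pos_def by (rule LeastI_ex) (auto simp: in_set_conv_nth)

lemma finish:
  assumes X: "X \<in> conn_sets V E k" and fin: "finite V" and k: "k \<ge> 1"
    and u: "u \<in> V" "u \<notin> X" and w: "w \<in> X" and p: "pos ord u < pos ord w"
    and c: "connected_on E (insert u X - {w})"
  shows "\<exists>X' \<in> nbhd V E k X. lex_less ord X' X"
proof -
  have XV: "X \<subseteq> V" "card X = k" using X unfolding conn_sets_def by auto
  have fX: "finite X" using XV fin finite_subset by blast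
  have uw: "u \<noteq> w" using u w by blast
  define X' where "X' = insert u (X - {w})"
  have eq: "insert u X - {w} = X'" using uw unfolding X'_def by blast
  have cX'X: "card (X - {w}) = k - 1" using XV w fX by simp
  have cX': "card X' = k" unfolding X'_def using cX'X fX u k by simp
  have int: "X \<inter> X' = X - {w}" unfolding X'_def using u by blast
  have "X' \<in> nbhd V E k X" unfolding nbhd_def conn_sets_def
    using cX' int cX'X c eq XV u unfolding X'_def by auto
  moreover have "lex_less ord X' X" unfolding lex_less_def
  proof (intro conjI bexI[of _ u] ballI)
    show "X' \<noteq> X" using u unfolding X'_def by blast
    show "u \<in> X' - X" using u unfolding X'_def by blast
    fix y assume "y \<in> X' - X \<union> (X - X')"
    then have "y = u \<or> y = w" unfolding X'_def by blast
    then show "pos ord u \<le> pos ord y" using p by auto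
  qed
  ultimately show ?thesis by blast
qed

lemma prefix_conn:
  assumes D: "distinct ord" "\<forall>i. 0 < i \<and> i < length ord \<longrightarrow> (\<exists>j<i. E (ord ! j) (ord ! i))"
    and sym: "\<forall>u v. E u v \<longrightarrow> E v u"
  shows "i < length ord \<Longrightarrow> connected_on E (set (take (Suc i) ord))"
proof (induction i)
  case 0
  then have "set (take (Suc 0) ord) = {ord ! 0}" by (cases ord) auto
  then show ?case using conn_single by metis
next
  case (Suc i)
  then obtain j where j: "j < Suc i" "E (ord ! j) (ord ! Suc i)" using D(2) by blast
  have jin: "ord ! j \<in> set (take (Suc i) ord)" using j(1) Suc.prems
    by (auto simp: in_set_conv_nth intro!: exI[of _ j])
  have "take (Suc (Suc i)) ord = take (Suc i) ord @ [ord ! Suc i]"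
    using Suc.prems by (simp add: take_Suc_conv_app_nth)
  then have eq: "set (take (Suc (Suc i)) ord) = insert (ord ! Suc i) (set (take (Suc i) ord))" by simp
  show ?case unfolding eq
    using conn_insert[OF Suc.IH jin] Suc.prems j(2) sym by auto
qed

theorem lemma2:
  fixes V :: "'a set" and E :: "'a \<Rightarrow> 'a \<Rightarrow> bool" and k :: nat and ord :: "'a list"
    and X :: "'a set"
  assumes "graph V E"
    and "connected_on E V"
    and "k \<ge> 1"
    and "dfs_order V E ord"
    and "X \<in> conn_sets V E k"
    and "\<not> (\<forall>Y \<in> conn_sets V E k. lex_le ord X Y)"
  shows "\<exists>X' \<in> nbhd V E k X. lex_less ord X' X"
proof -
  have fV: "finite V" and sym: "\<forall>u v. E u v \<longrightarrow> E v u"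
    and EV: "\<And>u v. E u v \<Longrightarrow> u \<in> V \<and> v \<in> V"
    using assms(1) unfolding graph_def by blast+
  note D = dfs_facts[OF assms(1,2,4)]
  have dist: "distinct ord" and setV: "set ord = V" and ne: "ord \<noteq> []"
    and parI: "\<forall>i. 0 < i \<and> i < length ord \<longrightarrow> (\<exists>j<i. E (ord ! j) (ord ! i))"
    using D by blast+
  have XV: "X \<subseteq> V" "card X = k" "connected_on E X"
    using assms(5) unfolding conn_sets_def by auto
  have fX: "finite X" using XV(1) fV finite_subset by blast
  have Xne: "X \<noteq> {}" using XV(2) assms(3) by auto
  have posinj: "x = y" if "x \<in> V" "y \<in> V" "pos ord x = pos ord y" for x y
    using pos_in[of x ord] pos_in[of y ord] that setV by metis
  have par: "\<exists>p\<in>V. E p v \<and> pos ord p < pos ord v" if "v \<in> V" "v \<noteq> ord ! 0" for v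
  proof -
    have pv: "pos ord v < length ord" "ord ! pos ord v = v" using pos_in[of v ord] that setV by auto
    have "pos ord v \<noteq> 0" using pv that by metis
    then obtain j where j: "j < pos ord v" "E (ord ! j) (ord ! pos ord v)" using parI pv by blast
    have "pos ord (ord ! j) = j" using pos_nth[OF dist] j pv by simp
    moreover have "ord ! j \<in> V" using j pv setV by (metis order.strict_trans nth_mem)
    ultimately show ?thesis using j pv by metis
  qed
  have r0: "pos ord (ord ! 0) = 0" using pos_nth[OF dist] ne by simp
  show ?thesis
  proof (cases "ord ! 0 \<in> X")
    case False
    obtain m where m: "m \<in> X" "\<forall>y. y \<in> X \<longrightarrow> pos ord m \<le> pos ord y"
      using ex_has_least_nat[of "\<lambda>x. x \<in> X"] Xne by blast
    have mV: "m \<in> V" using m XV by blast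
    obtain p where p: "p \<in> V" "E p m" "pos ord p < pos ord m"
      using par[OF mV] m(1) False by metis
    have pX: "p \<notin> X" using p(3) m(2) by fastforce
    have cS: "connected_on E (insert p X)"
      using conn_insert[OF XV(3) m(1) p(2)] sym p(2) by blast
    have fS: "finite (insert p X)" using fX by simp
    obtain w where w: "w \<in> insert p X - {p}" "connected_on E (insert p X - {w})"
      using nonsep[OF fS cS conn_single[of E p] _ _ sym] pX Xne by blast
    have wX: "w \<in> X" using w by blast
    show ?thesis
      using finish[OF assms(5) fV assms(3) p(1) pX wX _ w(2)] p(3) m(2) wX by fastforce
  next
    case True
    obtain Y where Y: "Y \<in> conn_sets V E k" "\<not> lex_le ord X Y" using assms(6) by blast
    have ex: "\<exists>v\<in>V - X. \<exists>x\<in>X. pos ord v < pos ord x"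
    proof (rule ccontr)
      assume H: "\<not> ?thesis"
      have YV: "Y \<subseteq> V" "card Y = k" using Y unfolding conn_sets_def by auto
      have XY: "X \<noteq> Y" using Y(2) unfolding lex_le_def by blast
      have "\<not> X \<subseteq> Y"
      proof
        assume "X \<subseteq> Y"
        then have "X = Y" using card_subset_eq[of Y X] YV XV fV finite_subset by metis
        then show False using XY by blast
      qed
      then obtain x0 where "x0 \<in> X - Y" by blast
      then obtain x where x: "x \<in> X - Y" "\<forall>y. y \<in> X - Y \<longrightarrow> pos ord x \<le> pos ord y"
        using ex_has_least_nat[of "\<lambda>x. x \<in> X - Y" x0 "pos ord"] by blast
      have "lex_less ord X Y" unfolding lex_less_def
      proof (intro conjI bexI[of _ x] ballI)
        show "X \<noteq> Y" by fact
        show "x \<in> X - Y" by fact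
        fix y assume "y \<in> X - Y \<union> (Y - X)"
        then show "pos ord x \<le> pos ord y"
        proof
          assume "y \<in> X - Y" then show ?thesis using x by blast
        next
          assume "y \<in> Y - X"
          then have "y \<in> V - X" using YV by blast
          then show ?thesis using H x(1) by force
        qed
      qed
      then show False using Y(2) unfolding lex_le_def by blast
    qed
    then obtain v x where vx: "v \<in> V - X" "x \<in> X" "pos ord v < pos ord x" by blast
    obtain u where u: "u \<in> V - X" "\<forall>y. y \<in> V - X \<longrightarrow> pos ord u \<le> pos ord y"
      using ex_has_least_nat[of "\<lambda>x. x \<in> V - X" v "pos ord"] vx(1) by blast
    have ux: "pos ord u < pos ord x" using u(2) vx by fastforce
    have pu: "pos ord u < length ord" "ord ! pos ord u = u" using pos_in[of u ord] u setV by auto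
    define Q where "Q = set (take (Suc (pos ord u)) ord)"
    have Qc: "connected_on E Q" unfolding Q_def using prefix_conn[OF dist parI sym pu(1)] .
    have Qchar: "y \<in> Q \<longleftrightarrow> y \<in> V \<and> pos ord y \<le> pos ord u" for y
    proof
      assume "y \<in> Q"
      then obtain j where j: "j < length ord" "j \<le> pos ord u" "ord ! j = y"
        unfolding Q_def by (auto simp: in_set_conv_nth)
      then show "y \<in> V \<and> pos ord y \<le> pos ord u" using pos_nth[OF dist] setV nth_mem by metis
    next
      assume y: "y \<in> V \<and> pos ord y \<le> pos ord u"
      have "pos ord y < length ord" "ord ! pos ord y = y" using pos_in[of y ord] y setV by auto
      then show "y \<in> Q" unfolding Q_def using y pu(1)
        by (auto simp: in_set_conv_nth intro!: exI[of _ "pos ord y"])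
    qed
    have uQ: "u \<in> Q" using Qchar u(1) by blast
    have QS: "Q \<subseteq> insert u X"
    proof
      fix y assume "y \<in> Q"
      then have y: "y \<in> V" "pos ord y \<le> pos ord u" using Qchar by auto
      show "y \<in> insert u X"
      proof (cases "y \<in> X")
        case False
        then have "pos ord u \<le> pos ord y" using u(2) y(1) by blast
        then have "y = u" using posinj y u(1) by auto
        then show ?thesis by blast
      qed blast
    qed
    have SU: "insert u X = X \<union> Q" using QS uQ by blast
    have r: "ord ! 0 \<in> Q" using Qchar True XV(1) r0 by auto
    have cS: "connected_on E (insert u X)"
      unfolding SU using conn_union[OF XV(3) Qc] r True by blast
    have fS: "finite (insert u X)" using fX by simp
    have xQ: "x \<notin> Q" using Qchar ux by auto
    obtain w where w: "w \<in> insert u X - Q" "connected_on E (insert u X - {w})"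
      using nonsep[OF fS cS Qc QS _ sym] xQ vx(2) by blast
    have wX: "w \<in> X" using w uQ by blast
    have "pos ord u < pos ord w" using w(1) Qchar XV(1) wX by auto
    then show ?thesis
      using finish[OF assms(5) fV assms(3) _ _ wX _ w(2)] u(1) by blast
  qed
qed

end
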